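(* Let $n\ge 2$, let $\Delta_n^\circ=\{\mathbf{s}\in\mathbb{R}^n: s_i>0 \text{ for all } i,\ \sum_i s_i=1\}$, let $\partial\Delta_n=\{\mathbf{s}\in\mathbb{R}^n: s_i\ge 0\ \forall i,\ \sum_i s_i=1,\ s_i=0\text{ for some } i\}$, and for $\mathbf{s}\in\mathbb{R}^n$ let $M(\mathbf{s})=\operatorname{Diag}(\mathbf{s})-\mathbf{s}\mathbf{s}^\top$. Let $\sigma_1:\mathbb{R}^n\to\Delta_n^\circ$ be the softmax map $\sigma_1(\mathbf{x})_i=e^{x_i}/\sum_{j}e^{x_j}$, whose Jacobian at $\mathbf{x}$ is $J_{\sigma_1}(\mathbf{x})=M(\sigma_1(\mathbf{x}))$, so that $\sup_{\mathbf{x}\in\mathbb{R}^n}\|J_{\sigma_1}(\mathbf{x})\|_p=\sup_{\mathbf{s}\in\Delta_n^\circ}\|M(\mathbf{s})\|_p$. (a) For $p=1$ or $p=\infty$, this supremum equals $1/2$ and is attained at a point of $\Delta_n^\circ$; in particular, for $\mathbf{x}=(\ln(n-1),0,\dots,0)\in\mathbb{R}^n$, the point $\mathbf{s}=\sigma_1(\mathbf{x})$ lies in $\Delta_n^\circ$ and $\|M(\mathbf{s})\|_p=1/2$. (b) For $p\in(1,\infty)$, the supremum again equals $1/2$. If $n>2$, it is not attained in $\Delta_n^\circ$ (i.e. $\|M(\mathbf{s})\|_p<1/2$ for every $\mathbf{s}\in\Delta_n^\circ$), and there exists a sequence $(\mathbf{s}_k)_{k\ge1}\subset\Delta_n^\circ$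 converging to a point of $\partial\Delta_n$, with $\mathbf{s}_k=\sigma_1(\mathbf{x}_k)$ for some $\mathbf{x}_k\in\mathbb{R}^n$, such that $\lim_{k\to\infty}\|M(\mathbf{s}_k)\|_p=1/2$. If $n=2$, the supremum $1/2$ is attained at a point of $\Delta_2^\circ$.
   Context: For $p\in[1,\infty)$, $\|\mathbf{x}\|_p=(\sum_i|x_i|^p)^{1/p}$ and $\|\mathbf{x}\|_\infty=\max_i|x_i|$; for a square matrix $A$, $\|A\|_p=\sup_{\mathbf{v}\ne0}\|A\mathbf{v}\|_p/\|\mathbf{v}\|_p$ is the induced operator norm. $\operatorname{Diag}(\mathbf{s})$ is the diagonal matrix with diagonal $\mathbf{s}$. *)

theory Defs
  imports "HOL-Analysis.Analysis"
begin

definition pnorm :: "ereal \<Rightarrow> real^'n \<Rightarrow> real" where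
  "pnorm p x = (if p = \<infinity> then Max (range (\<lambda>i. \<bar>x $ i\<bar>))
                else (\<Sum>i\<in>UNIV. \<bar>x $ i\<bar> powr real_of_ereal p) powr (1 / real_of_ereal p))"

definition opnorm :: "ereal \<Rightarrow> real^'n^'n \<Rightarrow> real" where
  "opnorm p A = Sup {pnorm p (A *v v) / pnorm p v | v. v \<noteq> 0}"

definition Mmat :: "real^'n \<Rightarrow> real^'n^'n" where
  "Mmat s = (\<chi> i j. (if i = j then s $ i else 0) - s $ i * s $ j)"

definition softmax :: "real^'n \<Rightarrow> real^'n" where
  "softmax x = (\<chi> i. exp (x $ i) / (\<Sum>j\<in>UNIV. exp (x $ j)))"

definition open_simplex :: "(real^'n) set" where
  "open_simplex = {s. (\<forall>i. s $ i > 0) \<and> (\<Sum>i\<in>UNIV. s $ i) = 1}"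

definition simplex_boundary :: "(real^'n) set" where
  "simplex_boundary = {s. (\<forall>i. s $ i \<ge> 0) \<and> (\<Sum>i\<in>UNIV. s $ i) = 1 \<and> (\<exists>i. s $ i = 0)}"

end

theory Submission
  imports Defs "HOL-Real_Asymp.Real_Asymp"
begin


lemma Mmat_mult:
  "Mmat s *v v = (\<chi> i. s$i * (v$i - (\<Sum>j\<in>UNIV. s$j * v$j)))"
proof -
  have "(Mmat s *v v) $ i = s$i * (v$i - (\<Sum>j\<in>UNIV. s$j * v$j))" for i
  proof -
    have "(Mmat s *v v) $ i = (\<Sum>j\<in>UNIV. (if i = j then s $ i * v$j else 0) - s$i * (s$j * v$j))"
      unfolding Mmat_def matrix_vector_mult_def by (auto simp: algebra_simps intro!: sum.cong)
    also have "\<dots> = s$i * v$i - s$i * (\<Sum>j\<in>UNIV. s$j * v$j)"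
      by (simp add: sum_subtractf sum_distrib_left)
    finally show ?thesis by (simp add: algebra_simps)
  qed
  then show ?thesis by (simp add: vec_eq_iff)
qed

lemma simplex_le1:
  assumes "s \<in> open_simplex" shows "s $ i \<le> 1" "s $ i > 0"
proof -
  have "s $ i \<le> (\<Sum>j\<in>UNIV. s $ j)"
    by (rule member_le_sum) (use assms in \<open>auto simp: open_simplex_def less_imp_le\<close>)
  then show "s $ i \<le> 1" using assms by (simp add: open_simplex_def)
  show "s $ i > 0" using assms by (simp add: open_simplex_def)
qed

lemma abs_M:
  assumes "s \<in> open_simplex"
  shows "\<bar>Mmat s $ i $ j\<bar> = (if i = j then s$i * (1 - s$i) else s$i * s$j)"
  using simplex_le1[OF assms, of i] simplex_le1[OF assms, of j]
  by (auto simp: Mmat_def algebra_simps)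

lemma sum_others:
  assumes "s \<in> open_simplex"
  shows "(\<Sum>j\<in>UNIV-{i}. s$j) = 1 - s$i"
  using assms sum.remove[of UNIV i "\<lambda>j. s$j"] by (simp add: open_simplex_def)

lemma rowsum_M:
  assumes "s \<in> open_simplex"
  shows "(\<Sum>j\<in>UNIV. \<bar>Mmat s $ i $ j\<bar>) = 2 * s$i * (1 - s$i)"
proof -
  have "(\<Sum>j\<in>UNIV. \<bar>Mmat s $ i $ j\<bar>) = s$i * (1 - s$i) + (\<Sum>j\<in>UNIV-{i}. s$i * s$j)"
    by (subst sum.remove[of UNIV i]) (auto simp: abs_M[OF assms] intro!: sum.cong)
  also have "\<dots> = 2 * s$i * (1 - s$i)"
    by (simp add: sum_distrib_left[symmetric] sum_others[OF assms])
  finally show ?thesis .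
qed

lemma colsum_M:
  assumes "s \<in> open_simplex"
  shows "(\<Sum>i\<in>UNIV. \<bar>Mmat s $ i $ j\<bar>) = 2 * s$j * (1 - s$j)"
proof -
  have "\<bar>Mmat s $ i $ j\<bar> = \<bar>Mmat s $ j $ i\<bar>" for i
    by (simp add: abs_M[OF assms] mult.commute)
  then show ?thesis by (simp add: rowsum_M[OF assms])
qed

lemma half_bound: "2 * (x::real) * (1 - x) \<le> 1/2"
proof -
  have "0 \<le> (2*x - 1)^2" by simp
  then show ?thesis by (simp add: power2_eq_square algebra_simps)
qed

lemma softmax_simplex: "softmax x \<in> open_simplex"
proof -
  have pos: "(\<Sum>j\<in>UNIV. exp (x $ j)) > 0" by (simp add: sum_pos)
  then show ?thesis
    by (auto simp: open_simplex_def softmax_def sum_divide_distrib[symmetric])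
qed

lemma pnorm_pos:
  fixes v :: "real^'n"
  assumes "v \<noteq> 0" "p = \<infinity> \<or> real_of_ereal p > 0"
  shows "pnorm p v > 0"
proof -
  obtain i where i: "v $ i \<noteq> 0" using assms(1) by (auto simp: vec_eq_iff)
  show ?thesis
  proof (cases "p = \<infinity>")
    case True
    have "\<bar>v$i\<bar> \<le> Max (range (\<lambda>i. \<bar>v $ i\<bar>))" by (rule Max_ge) auto
    moreover have "0 < \<bar>v$i\<bar>" using i by simp
    ultimately have "0 < Max (range (\<lambda>i. \<bar>v $ i\<bar>))" by linarith
    then show ?thesis using True by (simp add: pnorm_def)
  next
    case False
    then have r: "real_of_ereal p > 0" using assms by auto
    have "0 < \<bar>v$i\<bar> powr real_of_ereal p" using i by simp
    also have "\<dots> \<le> (\<Sum>i\<in>UNIV. \<bar>v $ i\<bar> powr real_of_ereal p)"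
      by (rule member_le_sum) auto
    finally show ?thesis using False by (simp add: pnorm_def)
  qed
qed

lemma pnorm_nonneg: "pnorm p v \<ge> 0"
proof (cases "p = \<infinity>")
  case True
  have "\<bar>v$i\<bar> \<le> Max (range (\<lambda>i. \<bar>v $ i\<bar>))" for i by (rule Max_ge) auto
  then have "0 \<le> Max (range (\<lambda>i. \<bar>v $ i\<bar>))" by (meson abs_ge_zero order.trans)
  then show ?thesis using True by (simp add: pnorm_def)
qed (simp add: pnorm_def)

lemma opnorm_le:
  fixes A :: "real^'n^'n"
  assumes "p = \<infinity> \<or> real_of_ereal p > 0"
    and "\<And>v. v \<noteq> 0 \<Longrightarrow> pnorm p (A *v v) \<le> K * pnorm p v"
  shows "opnorm p A \<le> K"
  unfolding opnorm_def
proof (rule cSup_least)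
  show "{pnorm p (A *v v) / pnorm p v |v. v \<noteq> 0} \<noteq> {}"
  proof -
    have "pnorm p (A *v 1) / pnorm p (1::real^'n) \<in> {pnorm p (A *v v) / pnorm p v |v. v \<noteq> 0}"
    proof -
      have "(1::real^'n) \<noteq> 0" by (simp add: vec_eq_iff)
      then show ?thesis by blast
    qed
    then show ?thesis by blast
  qed
  fix x assume "x \<in> {pnorm p (A *v v) / pnorm p v |v. v \<noteq> 0}"
  then obtain v where v: "v \<noteq> 0" "x = pnorm p (A *v v) / pnorm p v" by auto
  then show "x \<le> K" using assms(2)[OF v(1)] pnorm_pos[OF v(1) assms(1)]
    by (simp add: divide_le_eq)
qed

lemma opnorm_ge:
  fixes A :: "real^'n^'n"
  assumes "p = \<infinity> \<or> real_of_ereal p > 0"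
    and "\<And>v. v \<noteq> 0 \<Longrightarrow> pnorm p (A *v v) \<le> K * pnorm p v"
    and "v \<noteq> 0"
  shows "pnorm p (A *v v) / pnorm p v \<le> opnorm p A"
  unfolding opnorm_def
proof (rule cSup_upper)
  show "bdd_above {pnorm p (A *v v) / pnorm p v |v. v \<noteq> 0}"
  proof (rule bdd_aboveI)
    fix x assume "x \<in> {pnorm p (A *v v) / pnorm p v |v. v \<noteq> 0}"
    then obtain v where v: "v \<noteq> 0" "x = pnorm p (A *v v) / pnorm p v" by auto
    then show "x \<le> K" using assms(2)[OF v(1)] pnorm_pos[OF v(1) assms(1)]
      by (simp add: divide_le_eq)
  qed
qed (use assms in auto)



lemma powr_convex0:
  assumes r: "(r::real) \<ge> 1" shows "convex_on {0..} (\<lambda>x. x powr r)"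
proof (rule convex_onI)
  fix t x y :: real
  assume t: "0 < t" "t < 1" and xy: "x \<in> {0..}" "y \<in> {0..}"
  show "((1 - t) *\<^sub>R x + t *\<^sub>R y) powr r \<le> (1 - t) * x powr r + t * y powr r"
  proof (cases "x > 0 \<and> y > 0")
    case True
    then show ?thesis using convex_onD[OF powr_convex[OF r], of t x y] t by auto
  next
    case False
    have pw: "c powr r \<le> c" if "0 \<le> c" "c \<le> 1" for c :: real
    proof -
      show ?thesis using that r powr_le_one_le[of c r] by (cases "c = 0") auto
    qed
    show ?thesis
    proof (cases "x = 0")
      case True
      have "(t * y) powr r = t powr r * y powr r" using t xy by (simp add: powr_mult)
      also have "\<dots> \<le> t * y powr r" using pw[of t] t by (intro mult_right_mono) auto
      finally show ?thesis using True by simp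
    next
      case False
      then have "y = 0" using \<open>\<not> (x > 0 \<and> y > 0)\<close> xy by auto
      have "((1-t) * x) powr r = (1-t) powr r * x powr r" using t xy by (simp add: powr_mult)
      also have "\<dots> \<le> (1-t) * x powr r" using pw[of "1-t"] t by (intro mult_right_mono) auto
      finally show ?thesis using \<open>y = 0\<close> by simp
    qed
  qed
qed (simp add: convex_real_interval)

lemma jensen_pow:
  fixes w y :: "'a \<Rightarrow> real"
  assumes "finite S" "S \<noteq> {}" "\<And>j. j \<in> S \<Longrightarrow> w j \<ge> 0" "\<And>j. j \<in> S \<Longrightarrow> y j \<ge> 0"
    and R: "(\<Sum>j\<in>S. w j) > 0" and r: "r \<ge> 1"
  shows "(\<Sum>j\<in>S. w j * y j) powr r \<le> (\<Sum>j\<in>S. w j) powr (r - 1) * (\<Sum>j\<in>S. w j * y j powr r)"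
proof -
  define R where "R = (\<Sum>j\<in>S. w j)"
  have Rp: "R > 0" using R by (simp add: R_def)
  have "(\<Sum>j\<in>S. (w j / R) *\<^sub>R y j) powr r \<le> (\<Sum>j\<in>S. (w j / R) * y j powr r)"
    by (rule convex_on_sum[OF assms(1,2) powr_convex0[OF r]])
       (use assms Rp in \<open>auto simp: R_def sum_divide_distrib[symmetric]\<close>)
  also have "(\<Sum>j\<in>S. (w j / R) *\<^sub>R y j) = (\<Sum>j\<in>S. w j * y j) / R"
    by (simp add: sum_divide_distrib)
  also have "(\<Sum>j\<in>S. (w j / R) * y j powr r) = (\<Sum>j\<in>S. w j * y j powr r) / R"
    by (simp add: sum_divide_distrib)
  finally have *: "(\<Sum>j\<in>S. w j * y j) powr r / R powr r \<le> (\<Sum>j\<in>S. w j * y j powr r) / R"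
    using Rp assms by (simp add: powr_divide sum_nonneg)
  have "(\<Sum>j\<in>S. w j * y j) powr r \<le> R powr r * ((\<Sum>j\<in>S. w j * y j powr r) / R)"
    using * Rp by (simp add: divide_le_eq mult.commute)
  also have "\<dots> = R powr (r - 1) * (\<Sum>j\<in>S. w j * y j powr r)"
    using Rp by (simp add: powr_diff)
  finally show ?thesis by (simp add: R_def)
qed



lemma simplex_lt1:
  assumes "s \<in> open_simplex" "CARD('n::finite) \<ge> 2"
  shows "(s::real^'n) $ i < 1"
proof -
  obtain j :: 'n where "j \<noteq> i"
  proof -
    have "card (UNIV - {i}) \<ge> 1" using assms(2) by (simp add: card_Diff_singleton)
    then obtain j where "j \<in> UNIV - {i}" by (metis card.empty ex_in_conv not_one_le_zero)
    then show ?thesis using that by auto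
  qed
  have "s$j > 0" using assms by (simp add: open_simplex_def)
  moreover have "s$j \<le> 1 - s$i"
    using member_le_sum[of j "UNIV-{i}" "\<lambda>j. s$j"] \<open>j \<noteq> i\<close> sum_others[OF assms(1), of i]
      assms(1) by (force simp: open_simplex_def less_imp_le)
  ultimately show ?thesis by linarith
qed

lemma pnorm_fin: "pnorm (ereal r) x = (\<Sum>i\<in>UNIV. \<bar>x $ i\<bar> powr r) powr (1 / r)"
  by (simp add: pnorm_def)

lemma Mv_abs_le:
  fixes A :: "real^'n::finite^'m::finite"
  shows "\<bar>(A *v v) $ i\<bar> \<le> (\<Sum>j\<in>UNIV. \<bar>A $ i $ j\<bar> * \<bar>v $ j\<bar>)"
  unfolding matrix_vector_mult_def vec_lambda_beta using sum_abs[of "\<lambda>j. A$i$j * v$j" UNIV] by (simp add: abs_mult)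

lemma UB_fin:
  fixes s :: "real^'n::finite"
  assumes s: "s \<in> open_simplex" and n2: "CARD('n) \<ge> 2" and r: "r \<ge> 1"
  defines "D \<equiv> Max (range (\<lambda>j. \<Sum>i\<in>UNIV. (2 * s$i*(1-s$i)) powr (r-1) * \<bar>Mmat s $ i $ j\<bar>))"
  shows "pnorm (ereal r) (Mmat s *v v) \<le> D powr (1/r) * pnorm (ereal r) v"
    and "D \<le> (1/2) powr r"
    and "r > 1 \<Longrightarrow> CARD('n) > 2 \<Longrightarrow> D < (1/2) powr r"
proof -
  define a where "a i j = \<bar>Mmat s $ i $ j\<bar>" for i j
  define R where "R i = 2 * s$i*(1-s$i)" for i
  define Dj where "Dj j = (\<Sum>i\<in>UNIV. R i powr (r-1) * a i j)" for j
  have D_def': "D = Max (range Dj)" by (simp add: D_def Dj_def R_def a_def)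
  have Rsum: "(\<Sum>j\<in>UNIV. a i j) = R i" for i by (simp add: a_def R_def rowsum_M[OF s])
  have Csum: "(\<Sum>i\<in>UNIV. a i j) = R j" for j by (simp add: a_def R_def colsum_M[OF s])
  have Rpos: "R i > 0" for i using simplex_le1[OF s, of i] simplex_lt1[OF s n2, of i]
    by (simp add: R_def)
  have Rhalf: "R i \<le> 1/2" for i unfolding R_def by (rule half_bound)
  have a0: "a i j \<ge> 0" for i j by (simp add: a_def)
  have apos: "a i j > 0" for i j
    using simplex_le1[OF s, of i] simplex_le1[OF s, of j] simplex_lt1[OF s n2, of i]
    by (cases "i = j") (auto simp: a_def abs_M[OF s])
  have Dj_le: "Dj j \<le> D" for j unfolding D_def' by (rule Max_ge) auto
  have D_in: "D \<in> range Dj" unfolding D_def' by (rule Max_in) auto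
  have Dj0: "Dj j \<ge> 0" for j unfolding Dj_def by (intro sum_nonneg mult_nonneg_nonneg a0) simp
  have D0: "D \<ge> 0" using Dj0 Dj_le order.trans by blast
  have row: "\<bar>(Mmat s *v v) $ i\<bar> powr r \<le> R i powr (r-1) * (\<Sum>j\<in>UNIV. a i j * \<bar>v$j\<bar> powr r)" for i
  proof -
    have "\<bar>(Mmat s *v v) $ i\<bar> powr r \<le> (\<Sum>j\<in>UNIV. a i j * \<bar>v $ j\<bar>) powr r"
      using Mv_abs_le[of "Mmat s" v i] r by (intro powr_mono2) (auto simp: a_def)
    also have "\<dots> \<le> (\<Sum>j\<in>UNIV. a i j) powr (r - 1) * (\<Sum>j\<in>UNIV. a i j * \<bar>v$j\<bar> powr r)"
      by (rule jensen_pow) (use a0 Rpos Rsum r in auto)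
    finally show ?thesis by (simp add: Rsum)
  qed
  have "(\<Sum>i\<in>UNIV. \<bar>(Mmat s *v v) $ i\<bar> powr r)
        \<le> (\<Sum>i\<in>UNIV. R i powr (r-1) * (\<Sum>j\<in>UNIV. a i j * \<bar>v$j\<bar> powr r))"
    by (rule sum_mono) (rule row)
  also have "\<dots> = (\<Sum>j\<in>UNIV. Dj j * \<bar>v$j\<bar> powr r)"
  proof -
    have "(\<Sum>i\<in>UNIV. R i powr (r-1) * (\<Sum>j\<in>UNIV. a i j * \<bar>v$j\<bar> powr r))
        = (\<Sum>i\<in>UNIV. \<Sum>j\<in>UNIV. R i powr (r-1) * a i j * \<bar>v$j\<bar> powr r)"
      by (simp add: sum_distrib_left mult.assoc)
    also have "\<dots> = (\<Sum>j\<in>UNIV. \<Sum>i\<in>UNIV. R i powr (r-1) * a i j * \<bar>v$j\<bar> powr r)"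
      by (rule sum.swap)
    also have "\<dots> = (\<Sum>j\<in>UNIV. Dj j * \<bar>v$j\<bar> powr r)"
      by (simp add: Dj_def sum_distrib_right)
    finally show ?thesis .
  qed
  also have "\<dots> \<le> (\<Sum>j\<in>UNIV. D * \<bar>v$j\<bar> powr r)"
    by (intro sum_mono mult_right_mono Dj_le) simp
  finally have main: "(\<Sum>i\<in>UNIV. \<bar>(Mmat s *v v) $ i\<bar> powr r) \<le> D * (\<Sum>j\<in>UNIV. \<bar>v$j\<bar> powr r)"
    by (simp add: sum_distrib_left)
  have "pnorm (ereal r) (Mmat s *v v) \<le> (D * (\<Sum>j\<in>UNIV. \<bar>v$j\<bar> powr r)) powr (1/r)"
    unfolding pnorm_fin using main r by (intro powr_mono2) (auto intro: sum_nonneg)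
  also have "\<dots> = D powr (1/r) * pnorm (ereal r) v"
    unfolding pnorm_fin using D0 by (simp add: powr_mult sum_nonneg)
  finally show "pnorm (ereal r) (Mmat s *v v) \<le> D powr (1/r) * pnorm (ereal r) v" .
  have Djb: "Dj j \<le> (1/2) powr r" for j
  proof -
    have "Dj j \<le> (\<Sum>i\<in>UNIV. (1/2) powr (r-1) * a i j)"
      unfolding Dj_def using Rpos Rhalf r
      by (intro sum_mono mult_right_mono a0 powr_mono2) (auto simp: less_imp_le)
    also have "\<dots> = (1/2) powr (r-1) * R j" by (simp add: sum_distrib_left[symmetric] Csum)
    also have "\<dots> \<le> (1/2) powr (r-1) * (1/2)" by (intro mult_left_mono Rhalf) simp
    also have "\<dots> = (1/2) powr r" by (simp add: powr_diff)
    finally show ?thesis .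
  qed
  then show "D \<le> (1/2) powr r" using D_in by auto
  assume r1: "r > 1" and n3: "CARD('n) > 2"
  obtain i0 where i0: "s $ i0 \<noteq> 1/2"
  proof (rule ccontr)
    assume "\<not> thesis"
    then have all: "\<forall>i. s$i = 1/2" using that by blast
    have "(\<Sum>i\<in>UNIV. s$i) = (\<Sum>i\<in>(UNIV::'n set). 1/2)" using all by (intro sum.cong refl) blast
    also have "\<dots> = real CARD('n) / 2" by simp
    finally have "(\<Sum>i\<in>UNIV. s$i) = real CARD('n) / 2" .
    then show False using s n3 by (simp add: open_simplex_def)
  qed
  have Ri0: "R i0 < 1/2"
  proof -
    have "0 < (2 * s$i0 - 1)^2" using i0 by simp
    then show ?thesis by (simp add: R_def power2_eq_square algebra_simps)
  qed
  have Djs: "Dj j < (1/2) powr r" for j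
  proof -
    have "Dj j < (\<Sum>i\<in>UNIV. (1/2) powr (r-1) * a i j)"
      unfolding Dj_def
    proof (rule sum_strict_mono_ex1)
      show "\<forall>i\<in>UNIV. R i powr (r - 1) * a i j \<le> (1/2) powr (r - 1) * a i j"
        using Rpos Rhalf r by (auto intro!: mult_right_mono a0 powr_mono2 simp: less_imp_le)
      show "\<exists>i\<in>UNIV. R i powr (r - 1) * a i j < (1/2) powr (r - 1) * a i j"
        using Ri0 Rpos[of i0] r1 apos[of i0 j]
        by (intro bexI[of _ i0] mult_strict_right_mono powr_less_mono2) auto
    qed simp
    also have "\<dots> = (1/2) powr (r-1) * R j" by (simp add: sum_distrib_left[symmetric] Csum)
    also have "\<dots> \<le> (1/2) powr (r-1) * (1/2)" by (intro mult_left_mono Rhalf) simp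
    also have "\<dots> = (1/2) powr r" by (simp add: powr_diff)
    finally show ?thesis .
  qed
  then show "D < (1/2) powr r" using D_in by auto
qed



lemma Max_abs_ge: "\<bar>(v::real^'n::finite) $ i\<bar> \<le> Max (range (\<lambda>i. \<bar>v $ i\<bar>))"
  by (rule Max_ge) auto

lemma Max_range_nonneg:
  fixes f :: "'n::finite \<Rightarrow> real"
  assumes "\<And>j. f j \<ge> 0" shows "0 \<le> Max (range f)"
proof -
  have "f j \<le> Max (range f)" for j by (rule Max_ge) auto
  then show ?thesis using assms order.trans by blast
qed

lemma UB_inf:
  fixes s :: "real^'n::finite"
  assumes s: "s \<in> open_simplex"
  shows "pnorm \<infinity> (Mmat s *v v) \<le> 1/2 * pnorm \<infinity> v"
proof -
  define m where "m = Max (range (\<lambda>i. \<bar>v $ i\<bar>))"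
  have "\<bar>(Mmat s *v v) $ i\<bar> \<le> 1/2 * m" for i
  proof -
    have "\<bar>(Mmat s *v v) $ i\<bar> \<le> (\<Sum>j\<in>UNIV. \<bar>Mmat s $ i $ j\<bar> * \<bar>v $ j\<bar>)" by (rule Mv_abs_le)
    also have "\<dots> \<le> (\<Sum>j\<in>UNIV. \<bar>Mmat s $ i $ j\<bar> * m)"
      by (intro sum_mono mult_left_mono) (auto simp: m_def Max_abs_ge)
    also have "\<dots> = 2 * s$i * (1 - s$i) * m" by (simp add: sum_distrib_right[symmetric] rowsum_M[OF s])
    also have "\<dots> \<le> 1/2 * m"
      by (intro mult_right_mono half_bound) (simp add: m_def Max_range_nonneg)
    finally show ?thesis .
  qed
  then have "Max (range (\<lambda>i. \<bar>(Mmat s *v v) $ i\<bar>)) \<le> 1/2 * m"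
    by (intro Max.boundedI) auto
  then show ?thesis by (simp add: pnorm_def m_def)
qed

lemma UB_all:
  fixes s :: "real^'n::finite"
  assumes s: "s \<in> open_simplex" and n2: "CARD('n) \<ge> 2"
    and p: "p = \<infinity> \<or> (\<exists>r. p = ereal r \<and> r \<ge> 1)"
  shows "pnorm p (Mmat s *v v) \<le> 1/2 * pnorm p v"
proof (cases "p = \<infinity>")
  case True then show ?thesis using UB_inf[OF s] by simp
next
  case False
  then obtain r where r: "p = ereal r" "r \<ge> 1" using p by auto
  define D where "D \<equiv> Max (range (\<lambda>j. \<Sum>i\<in>UNIV. (2 * s$i*(1-s$i)) powr (r-1) * \<bar>Mmat s $ i $ j\<bar>))"
  have "pnorm (ereal r) (Mmat s *v v) \<le> D powr (1/r) * pnorm (ereal r) v"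
    using UB_fin(1)[OF s n2 r(2)] by (simp add: D_def)
  also have "\<dots> \<le> 1/2 * pnorm (ereal r) v"
  proof (intro mult_right_mono pnorm_nonneg)
    have "D powr (1/r) \<le> ((1/2) powr r) powr (1/r)"
      using UB_fin(2)[OF s n2 r(2)] r
      by (intro powr_mono2) (auto simp: D_def intro!: Max_range_nonneg sum_nonneg)
    also have "\<dots> = 1/2" using r by (simp add: powr_powr)
    finally show "D powr (1/r) \<le> 1/2" .
  qed
  finally show ?thesis using r by simp
qed

lemma pos_p: "p = \<infinity> \<or> (\<exists>r. p = ereal r \<and> r \<ge> 1) \<Longrightarrow> p = \<infinity> \<or> real_of_ereal p > 0"
  by auto

lemma opnorm_UB:
  fixes s :: "real^'n::finite"
  assumes s: "s \<in> open_simplex" and n2: "CARD('n) \<ge> 2"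
    and p: "p = \<infinity> \<or> (\<exists>r. p = ereal r \<and> r \<ge> 1)"
  shows "opnorm p (Mmat s) \<le> 1/2"
  by (rule opnorm_le[OF pos_p[OF p]]) (rule UB_all[OF s n2 p])

lemma opnorm_strict:
  fixes s :: "real^'n::finite"
  assumes s: "s \<in> open_simplex" and n3: "CARD('n) > 2" and r: "r > 1"
  shows "opnorm (ereal r) (Mmat s) < 1/2"
proof -
  have n2: "CARD('n) \<ge> 2" using n3 by simp
  define D where "D \<equiv> Max (range (\<lambda>j. \<Sum>i\<in>UNIV. (2 * s$i*(1-s$i)) powr (r-1) * \<bar>Mmat s $ i $ j\<bar>))"
  have D0: "D \<ge> 0"
    by (auto simp: D_def intro!: Max_range_nonneg sum_nonneg)
  have "opnorm (ereal r) (Mmat s) \<le> D powr (1/r)"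
    by (rule opnorm_le) (use r UB_fin(1)[OF s n2, of r] in \<open>auto simp: D_def\<close>)
  also have "D powr (1/r) < ((1/2) powr r) powr (1/r)"
    using UB_fin(3)[OF s n2, of r] r D0 n3 by (intro powr_less_mono2) (auto simp: D_def)
  also have "\<dots> = 1/2" using r by (simp add: powr_powr)
  finally show ?thesis .
qed



lemma pnorm1: "pnorm 1 (x::real^'n::finite) = (\<Sum>i\<in>UNIV. \<bar>x $ i\<bar>)"
  by (simp add: pnorm_def one_ereal_def sum_nonneg)

lemma pnorm_scale:
  fixes v :: "real^'n::finite"
  assumes "c \<ge> 0" "r > 0"
  shows "pnorm (ereal r) (\<chi> i. c * v$i) = c * pnorm (ereal r) v"
proof -
  have "(\<Sum>i\<in>UNIV. \<bar>(\<chi> i. c * v$i) $ i\<bar> powr r) = c powr r * (\<Sum>i\<in>UNIV. \<bar>v$i\<bar> powr r)"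
    using assms by (simp add: abs_mult powr_mult sum_distrib_left)
  then have "pnorm (ereal r) (\<chi> i. c * v$i) = (c powr r) powr (1/r) * pnorm (ereal r) v"
    unfolding pnorm_fin using assms by (simp add: powr_mult sum_nonneg)
  also have "(c powr r) powr (1/r) = c" using assms by (simp add: powr_powr)
  finally show ?thesis .
qed

lemma sum_axis: "(\<Sum>j\<in>UNIV. (s::real^'n::finite)$j * (if j = a then 1 else 0)) = s$a"
proof -
  have "(\<Sum>j\<in>UNIV. s$j * (if j = a then 1 else 0)) = (\<Sum>j\<in>UNIV. if j = a then s$j else 0)"
    by (rule sum.cong) auto
  then show ?thesis by simp
qed

lemma half_point:
  fixes s :: "real^'n::finite"
  assumes s: "s \<in> open_simplex" and n2: "CARD('n) \<ge> 2" and h: "s $ i0 = 1/2"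
    and p: "p \<in> {1, \<infinity>}"
  shows "opnorm p (Mmat s) = 1/2"
proof -
  have p': "p = \<infinity> \<or> (\<exists>r. p = ereal r \<and> r \<ge> 1)" using p by (auto simp: one_ereal_def)
  have ub: "\<And>v. v \<noteq> 0 \<Longrightarrow> pnorm p (Mmat s *v v) \<le> 1/2 * pnorm p v"
    using UB_all[OF s n2 p'] by blast
  have lb: "1/2 \<le> opnorm p (Mmat s)"
  proof (cases "p = \<infinity>")
    case False
    then have p1: "p = 1" using p by auto
    define v :: "real^'n" where "v = axis i0 1"
    have v0: "v \<noteq> 0" by (simp add: v_def)
    have "(\<Sum>j\<in>UNIV. s$j * v$j) = (\<Sum>j\<in>UNIV. if j = i0 then s$j else 0)"
      by (intro sum.cong) (auto simp: v_def axis_def)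
    then have c: "(\<Sum>j\<in>UNIV. s$j * v$j) = 1/2" using h by simp
    have "pnorm 1 (Mmat s *v v) = (\<Sum>i\<in>UNIV. s$i / 2)"
      unfolding pnorm1 Mmat_mult c using simplex_le1[OF s]
      by (intro sum.cong refl) (auto simp: v_def axis_def abs_mult abs_of_pos)
    also have "\<dots> = 1/2" using s by (simp add: sum_divide_distrib[symmetric] open_simplex_def)
    finally have "pnorm 1 (Mmat s *v v) / pnorm 1 v = 1/2"
      by (simp add: pnorm1 v_def axis_def)
    then show ?thesis using opnorm_ge[OF pos_p[OF p'] ub v0] p1 by simp
  next
    case True
    define v :: "real^'n" where "v = (\<chi> i. if i = i0 then 1 else -1)"
    have v0: "v \<noteq> 0" by (simp add: v_def vec_eq_iff)
    have "(\<Sum>j\<in>UNIV. s$j * v$j) = s$i0 - (\<Sum>j\<in>UNIV-{i0}. s$j)"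
      by (subst sum.remove[of UNIV i0]) (auto simp: v_def sum_negf[symmetric] intro!: sum.cong)
    then have c: "(\<Sum>j\<in>UNIV. s$j * v$j) = 0" using h sum_others[OF s, of i0] by simp
    have "1/2 \<le> pnorm \<infinity> (Mmat s *v v)"
      using Max_abs_ge[of "Mmat s *v v" i0] h unfolding pnorm_def Mmat_mult c
      by (simp add: v_def)
    moreover have "pnorm \<infinity> v = 1"
    proof -
      have "range (\<lambda>i. \<bar>v$i\<bar>) = {1::real}" by (auto simp: v_def)
      then show ?thesis by (simp add: pnorm_def)
    qed
    ultimately have "1/2 \<le> pnorm \<infinity> (Mmat s *v v) / pnorm \<infinity> v" by simp
    moreover have "pnorm \<infinity> (Mmat s *v v) / pnorm \<infinity> v \<le> opnorm \<infinity> (Mmat s)"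
      using opnorm_ge[OF pos_p[OF p'] ub v0] True by simp
    ultimately show ?thesis unfolding True by linarith
  qed
  moreover have "opnorm p (Mmat s) \<le> 1/2" by (rule opnorm_UB[OF s n2 p'])
  ultimately show ?thesis by simp
qed

lemma pair_point:
  fixes s :: "real^'n::finite"
  assumes s: "s \<in> open_simplex" and n2: "CARD('n) \<ge> 2" and ab: "a \<noteq> b" "s$a = s$b"
    and r: "r \<ge> 1"
  shows "s $ a \<le> opnorm (ereal r) (Mmat s)"
proof -
  have p': "ereal r = \<infinity> \<or> (\<exists>r'. ereal r = ereal r' \<and> r' \<ge> 1)" using r by auto
  have ub: "\<And>v. v \<noteq> 0 \<Longrightarrow> pnorm (ereal r) (Mmat s *v v) \<le> 1/2 * pnorm (ereal r) v"
    using UB_all[OF s n2 p'] by blast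
  define v :: "real^'n" where "v = axis a 1 - axis b 1"
  have "v $ a = 1" using ab by (simp add: v_def axis_def)
  then have v0: "v \<noteq> 0" by auto
  have "(\<Sum>j\<in>UNIV. s$j * v$j) = (\<Sum>j\<in>UNIV. s$j * (if j = a then 1 else 0)) - (\<Sum>j\<in>UNIV. s$j * (if j = b then 1 else 0))"
    by (simp add: v_def axis_def right_diff_distrib sum_subtractf)
  then have c: "(\<Sum>j\<in>UNIV. s$j * v$j) = 0" unfolding sum_axis using ab by simp
  have Mv: "Mmat s *v v = (\<chi> i. s$a * v$i)"
  proof -
    have "(Mmat s *v v) $ i = s$a * v$i" for i
      unfolding Mmat_mult c using ab by (cases "i = a"; cases "i = b") (auto simp: v_def axis_def)
    then show ?thesis by (simp add: vec_eq_iff)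
  qed
  have "pnorm (ereal r) (Mmat s *v v) / pnorm (ereal r) v = s$a"
    unfolding Mv using pnorm_scale[of "s$a" r v] simplex_le1[OF s, of a] r pnorm_pos[OF v0, of "ereal r"]
    by simp
  then show ?thesis using opnorm_ge[OF pos_p[OF p'] ub v0] by simp
qed

lemma softmax_spec:
  fixes i0 :: "'n::finite"
  assumes n2: "CARD('n) \<ge> 2"
  defines "x \<equiv> (\<chi> i. if i = i0 then ln (real CARD('n) - 1) else 0) :: real^'n"
  shows "softmax x $ i0 = 1/2"
proof -
  have n1: "real CARD('n) - 1 > 0" using n2 by simp
  have "(\<Sum>j\<in>UNIV. exp (x $ j)) = exp (x $ i0) + (\<Sum>j\<in>UNIV-{i0}. exp (x $ j))"
    by (subst sum.remove[of UNIV i0]) auto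
  also have "(\<Sum>j\<in>UNIV-{i0}. exp (x $ j)) = (\<Sum>j\<in>UNIV-{i0}. 1)"
    by (intro sum.cong) (auto simp: x_def)
  also have "\<dots> = real CARD('n) - 1" by (simp add: card_Diff_singleton)
  finally have S: "(\<Sum>j\<in>UNIV. exp (x $ j)) = 2 * (real CARD('n) - 1)"
    using n1 by (simp add: x_def)
  show ?thesis unfolding softmax_def vec_lambda_beta S using n1 by (simp add: x_def)
qed

lemma softmax_seq:
  fixes a b :: "'n::finite"
  assumes ab: "a \<noteq> b"
  shows "softmax ((\<chi> i. if i = a \<or> i = b then ln (real k + 1) else 0) :: real^'n)
       = (\<chi> i. if i = a \<or> i = b then (real k + 1) / (real CARD('n) + 2 * real k)
               else 1 / (real CARD('n) + 2 * real k))"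
proof -
  let ?x = "(\<chi> i. if i = a \<or> i = b then ln (real k + 1) else 0) :: real^'n"
  have e: "exp (?x $ j) = 1 + (if j \<in> {a, b} then real k else 0)" for j
    by (simp add: add.commute)
  have "(\<Sum>j\<in>UNIV. exp (?x $ j)) = real CARD('n) + (\<Sum>j\<in>UNIV. if j \<in> {a, b} then real k else 0)"
    unfolding e by (simp add: sum.distrib)
  also have "(\<Sum>j\<in>UNIV. if j \<in> {a, b} then real k else 0) = 2 * real k"
    using sum.inter_restrict[of UNIV "\<lambda>_. real k" "{a,b}"] ab by simp
  finally have S: "(\<Sum>j\<in>UNIV. exp (?x $ j)) = real CARD('n) + 2 * real k" .
  show ?thesis unfolding softmax_def S by (simp add: vec_eq_iff add.commute)
qed



lemma SUP_half:
  fixes f :: "'a \<Rightarrow> real"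
  assumes ub: "\<forall>x\<in>A. f x \<le> 1/2" and g: "\<forall>k. g k \<in> A" and lim: "(\<lambda>k. f (g k)) \<longlonglongrightarrow> 1/2"
  shows "(SUP x\<in>A. f x) = 1/2"
proof (rule antisym)
  have ne: "A \<noteq> {}" using g by blast
  show "(SUP x\<in>A. f x) \<le> 1/2" using ne ub by (intro cSUP_least) auto
  have bdd: "bdd_above (f ` A)" using ub by (intro bdd_aboveI2[where M="1/2"]) auto
  have "f (g k) \<le> (SUP x\<in>A. f x)" for k using g bdd by (intro cSUP_upper) auto
  then show "1/2 \<le> (SUP x\<in>A. f x)" using LIMSEQ_le_const2[OF lim] by blast
qed

lemma lim1: "(\<lambda>k. (real k + 1) / (N + 2 * real k)) \<longlonglongrightarrow> 1/2"
  by real_asymp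

lemma lim2: "(\<lambda>k. 1 / (N + 2 * real k)) \<longlonglongrightarrow> 0"
  by real_asymp



theorem proposition2:
  assumes n2: "CARD('n::finite) \<ge> 2"
  shows
   "(\<forall>p \<in> {1, \<infinity>}.
       (SUP x\<in>(UNIV :: (real^'n) set). opnorm p (Mmat (softmax x))) = 1/2
     \<and> (SUP s\<in>(open_simplex :: (real^'n) set). opnorm p (Mmat s)) = 1/2
     \<and> (\<exists>s\<in>(open_simplex :: (real^'n) set). opnorm p (Mmat s) = 1/2)
     \<and> (\<forall>i0::'n. let x = (\<chi> i. if i = i0 then ln (real CARD('n) - 1) else 0) :: real^'n
                  in softmax x \<in> open_simplex \<and> opnorm p (Mmat (softmax x)) = 1/2))
    \<and>
    (\<forall>p::ereal. 1 < p \<and> p < \<infinity> \<longrightarrow>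
       (SUP x\<in>(UNIV :: (real^'n) set). opnorm p (Mmat (softmax x))) = 1/2
     \<and> (SUP s\<in>(open_simplex :: (real^'n) set). opnorm p (Mmat s)) = 1/2
     \<and> (CARD('n) > 2 \<longrightarrow>
          (\<forall>s\<in>(open_simplex :: (real^'n) set). opnorm p (Mmat s) < 1/2)
        \<and> (\<exists>(sk :: nat \<Rightarrow> real^'n) (xk :: nat \<Rightarrow> real^'n) t.
              (\<forall>k\<ge>1. sk k \<in> open_simplex \<and> sk k = softmax (xk k))
            \<and> sk \<longlonglongrightarrow> t \<and> t \<in> simplex_boundary
            \<and> (\<lambda>k. opnorm p (Mmat (sk k))) \<longlonglongrightarrow> 1/2))
     \<and> (CARD('n) = 2 \<longrightarrow>
          (\<exists>s\<in>(open_simplex :: (real^'n) set). opnorm p (Mmat s) = 1/2)))"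
proof -
  obtain a b :: 'n where ab: "a \<noteq> b"
  proof -
    fix a :: 'n
    have "card (UNIV - {a}) \<ge> 1" using n2 by (simp add: card_Diff_singleton)
    then obtain b where "b \<in> UNIV - {a}" by (metis card.empty ex_in_conv not_one_le_zero)
    then show ?thesis using that[of a b] by auto
  qed
  define N where "N = real CARD('n)"
  define xk :: "nat \<Rightarrow> real^'n" where
    "xk k = (\<chi> i. if i = a \<or> i = b then ln (real k + 1) else 0)" for k
  define sk where "sk k = softmax (xk k)" for k
  have sk_eq: "sk k = (\<chi> i. if i = a \<or> i = b then (real k + 1) / (N + 2 * real k)
               else 1 / (N + 2 * real k))" for k
    unfolding sk_def xk_def N_def by (rule softmax_seq[OF ab])
  have sk_in: "sk k \<in> open_simplex" for k by (simp add: sk_def softmax_simplex)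
  have ska: "sk k $ a = (real k + 1) / (N + 2 * real k)" "sk k $ b = (real k + 1) / (N + 2 * real k)" for k
    by (simp_all add: sk_eq)
  have lim_op: "(\<lambda>k. opnorm (ereal r) (Mmat (sk k))) \<longlonglongrightarrow> 1/2" if r: "r \<ge> 1" for r
  proof (rule real_tendsto_sandwich[where f = "\<lambda>k. sk k $ a" and h = "\<lambda>k. 1/2"])
    show "\<forall>\<^sub>F k in sequentially. sk k $ a \<le> opnorm (ereal r) (Mmat (sk k))"
      using pair_point[OF sk_in n2 ab _ r] ska by simp
    show "\<forall>\<^sub>F k in sequentially. opnorm (ereal r) (Mmat (sk k)) \<le> 1/2"
      using opnorm_UB[OF sk_in n2, of "ereal r"] r by auto
    show "(\<lambda>k. sk k $ a) \<longlonglongrightarrow> 1/2" unfolding ska by (rule lim1)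
  qed simp
  have partA: "\<forall>p \<in> {1, \<infinity>}.
       (SUP x\<in>(UNIV :: (real^'n) set). opnorm p (Mmat (softmax x))) = 1/2
     \<and> (SUP s\<in>(open_simplex :: (real^'n) set). opnorm p (Mmat s)) = 1/2
     \<and> (\<exists>s\<in>(open_simplex :: (real^'n) set). opnorm p (Mmat s) = 1/2)
     \<and> (\<forall>i0::'n. let x = (\<chi> i. if i = i0 then ln (real CARD('n) - 1) else 0) :: real^'n
                  in softmax x \<in> open_simplex \<and> opnorm p (Mmat (softmax x)) = 1/2)"
  proof
    fix p :: ereal assume p: "p \<in> {1, \<infinity>}"
    have p': "p = \<infinity> \<or> (\<exists>r. p = ereal r \<and> r \<ge> 1)" using p by (auto simp: one_ereal_def)
    have ub: "\<forall>s\<in>open_simplex. opnorm p (Mmat (s::real^'n)) \<le> 1/2"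
      using opnorm_UB[OF _ n2 p'] by blast
    have spec: "softmax x \<in> open_simplex \<and> opnorm p (Mmat (softmax x)) = 1/2"
      if "x = (\<chi> i. if i = i0 then ln (real CARD('n) - 1) else 0)" for i0 and x :: "real^'n"
      using softmax_simplex[of x] half_point[OF softmax_simplex n2 _ p] softmax_spec[OF n2, of i0] that
      by simp
    define x0 :: "real^'n" where "x0 = (\<chi> i. if i = a then ln (real CARD('n) - 1) else 0)"
    have x0: "softmax x0 \<in> open_simplex" "opnorm p (Mmat (softmax x0)) = 1/2"
      using spec[OF x0_def] by auto
    have cst: "(\<lambda>k::nat. opnorm p (Mmat (softmax x0))) \<longlonglongrightarrow> 1/2"
      by (subst x0(2)) (rule tendsto_const)
    show "(SUP x\<in>(UNIV :: (real^'n) set). opnorm p (Mmat (softmax x))) = 1/2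
     \<and> (SUP s\<in>(open_simplex :: (real^'n) set). opnorm p (Mmat s)) = 1/2
     \<and> (\<exists>s\<in>(open_simplex :: (real^'n) set). opnorm p (Mmat s) = 1/2)
     \<and> (\<forall>i0::'n. let x = (\<chi> i. if i = i0 then ln (real CARD('n) - 1) else 0) :: real^'n
                  in softmax x \<in> open_simplex \<and> opnorm p (Mmat (softmax x)) = 1/2)"
    proof (intro conjI)
      show "(SUP x\<in>(UNIV :: (real^'n) set). opnorm p (Mmat (softmax x))) = 1/2"
        by (rule SUP_half[where g = "\<lambda>k. x0"]) (use ub softmax_simplex x0(1) cst in auto)
      show "(SUP s\<in>(open_simplex :: (real^'n) set). opnorm p (Mmat s)) = 1/2"
        by (rule SUP_half[where g = "\<lambda>k. softmax x0"]) (use ub x0(1) cst in auto)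
      show "\<exists>s\<in>(open_simplex :: (real^'n) set). opnorm p (Mmat s) = 1/2"
        using x0 by blast
      show "\<forall>i0::'n. let x = (\<chi> i. if i = i0 then ln (real CARD('n) - 1) else 0) :: real^'n
                  in softmax x \<in> open_simplex \<and> opnorm p (Mmat (softmax x)) = 1/2"
        using spec by (simp add: Let_def)
    qed
  qed
  have partB: "1 < p \<and> p < \<infinity> \<longrightarrow>
       (SUP x\<in>(UNIV :: (real^'n) set). opnorm p (Mmat (softmax x))) = 1/2
     \<and> (SUP s\<in>(open_simplex :: (real^'n) set). opnorm p (Mmat s)) = 1/2
     \<and> (CARD('n) > 2 \<longrightarrow>
          (\<forall>s\<in>(open_simplex :: (real^'n) set). opnorm p (Mmat s) < 1/2)
        \<and> (\<exists>(sk :: nat \<Rightarrow> real^'n) (xk :: nat \<Rightarrow> real^'n) t.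
              (\<forall>k\<ge>1. sk k \<in> open_simplex \<and> sk k = softmax (xk k))
            \<and> sk \<longlonglongrightarrow> t \<and> t \<in> simplex_boundary
            \<and> (\<lambda>k. opnorm p (Mmat (sk k))) \<longlonglongrightarrow> 1/2))
     \<and> (CARD('n) = 2 \<longrightarrow>
          (\<exists>s\<in>(open_simplex :: (real^'n) set). opnorm p (Mmat s) = 1/2))" for p :: ereal
  proof
    assume p: "1 < p \<and> p < \<infinity>"
    define r where "r = real_of_ereal p"
    have pr: "p = ereal r" "r > 1" using p by (cases p; auto simp: r_def)+
    have p': "p = \<infinity> \<or> (\<exists>r. p = ereal r \<and> r \<ge> 1)" using pr by auto
    have ub: "\<forall>s\<in>open_simplex. opnorm p (Mmat (s::real^'n)) \<le> 1/2"
      using opnorm_UB[OF _ n2 p'] by blast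
    have lim: "(\<lambda>k. opnorm p (Mmat (sk k))) \<longlonglongrightarrow> 1/2" using lim_op[of r] pr by simp
    show "(SUP x\<in>(UNIV :: (real^'n) set). opnorm p (Mmat (softmax x))) = 1/2
     \<and> (SUP s\<in>(open_simplex :: (real^'n) set). opnorm p (Mmat s)) = 1/2
     \<and> (CARD('n) > 2 \<longrightarrow>
          (\<forall>s\<in>(open_simplex :: (real^'n) set). opnorm p (Mmat s) < 1/2)
        \<and> (\<exists>(sk :: nat \<Rightarrow> real^'n) (xk :: nat \<Rightarrow> real^'n) t.
              (\<forall>k\<ge>1. sk k \<in> open_simplex \<and> sk k = softmax (xk k))
            \<and> sk \<longlonglongrightarrow> t \<and> t \<in> simplex_boundary
            \<and> (\<lambda>k. opnorm p (Mmat (sk k))) \<longlonglongrightarrow> 1/2))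
     \<and> (CARD('n) = 2 \<longrightarrow>
          (\<exists>s\<in>(open_simplex :: (real^'n) set). opnorm p (Mmat s) = 1/2))"
    proof (intro conjI impI)
      show "(SUP x\<in>(UNIV :: (real^'n) set). opnorm p (Mmat (softmax x))) = 1/2"
        by (rule SUP_half[where g = xk]) (use ub softmax_simplex lim in \<open>auto simp: sk_def\<close>)
      show "(SUP s\<in>(open_simplex :: (real^'n) set). opnorm p (Mmat s)) = 1/2"
        by (rule SUP_half[where g = sk]) (use ub sk_in lim in auto)
      assume n3: "CARD('n) > 2"
      show "\<forall>s\<in>(open_simplex :: (real^'n) set). opnorm p (Mmat s) < 1/2"
        using opnorm_strict[OF _ n3 pr(2)] pr by auto
      define t :: "real^'n" where "t = (\<chi> i. if i = a \<or> i = b then 1/2 else 0)"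
      have conv: "sk \<longlonglongrightarrow> t"
        unfolding sk_eq t_def
        by (intro tendsto_vec_lambda) (auto intro: lim1 lim2)
      have tb: "t \<in> simplex_boundary"
      proof -
        have "(\<Sum>i\<in>UNIV. t $ i) = (\<Sum>i\<in>UNIV. if i \<in> {a, b} then 1/2 else 0)"
          by (simp add: t_def)
        also have "\<dots> = 1"
          using sum.inter_restrict[of UNIV "\<lambda>_. 1/2::real" "{a,b}"] ab by simp
        finally have s1: "(\<Sum>i\<in>UNIV. t $ i) = 1" .
        have "UNIV \<noteq> {a, b}"
        proof
          assume "UNIV = {a, b}"
          then have "CARD('n) = card {a, b}" by simp
          then have "CARD('n) = 2" using ab by simp
          then show False using n3 by simp
        qed
        then obtain c where hc: "c \<notin> {a, b}" by blast
        have "\<forall>i. t $ i \<ge> 0" by (simp add: t_def)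
        moreover have "t $ c = 0" using hc by (simp add: t_def)
        ultimately show ?thesis using s1 unfolding simplex_boundary_def by blast
      qed
      show "\<exists>(sk :: nat \<Rightarrow> real^'n) (xk :: nat \<Rightarrow> real^'n) t.
              (\<forall>k\<ge>1. sk k \<in> open_simplex \<and> sk k = softmax (xk k))
            \<and> sk \<longlonglongrightarrow> t \<and> t \<in> simplex_boundary
            \<and> (\<lambda>k. opnorm p (Mmat (sk k))) \<longlonglongrightarrow> 1/2"
        using sk_in conv tb lim sk_def by blast
    next
      assume n: "CARD('n) = 2"
      have "sk 0 $ a = 1/2" using n by (simp add: ska N_def)
      then have "1/2 \<le> opnorm p (Mmat (sk 0))"
        using pair_point[OF sk_in n2 ab _ less_imp_le[OF pr(2)], of 0] ska pr by simp
      then show "\<exists>s\<in>(open_simplex :: (real^'n) set). opnorm p (Mmat s) = 1/2"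
        using ub sk_in by (intro bexI[of _ "sk 0"]) (auto intro: antisym)
    qed
  qed
  show ?thesis using partA partB by blast
qed

end
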